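(* For every integer $k\ge1$, $2d(\{0,1,\ldots,k-1\})\ge d(\{0,1,\ldots,k\})$, and the inequality is strict for $k>1$.
   Context: For $A,B\subseteq\mathbb{N}=\{0,1,\ldots\}$, $A+B=\{a+b:a\in A,b\in B\}$. For a nonempty finite $C\subseteq\mathbb{N}$, $d(C)$ is the number of sets $B\subseteq\mathbb{N}$ such that $B+D=C$ for some $D\subseteq\mathbb{N}$. *)

theory Defs
  imports Main
begin

definition sumset :: "nat set \<Rightarrow> nat set \<Rightarrow> nat set" where
  "sumset A B = {a + b | a b. a \<in> A \<and> b \<in> B}"

definition num_summands :: "nat set \<Rightarrow> nat" where
  "num_summands C = card {B. \<exists>D. sumset B D = C}"

end

theory Submission
  imports Defs
begin

definition SS :: "nat \<Rightarrow> nat set set" where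
  "SS n = {B. \<exists>D. sumset B D = {0..n}}"

lemma num_SS: "num_summands {0..n} = card (SS n)"
  unfolding num_summands_def SS_def by simp

lemma char:
  assumes "sumset B D = {0..n}"
  shows "B \<subseteq> {0..n}" "0 \<in> B" "finite B" "Max B \<le> n"
        "sumset B {0..n - Max B} = {0..n}"
proof -
  have "(0::nat) \<in> sumset B D" using assms by simp
  then obtain b d where bd: "b\<in>B" "d\<in>D" "0 = b+d" unfolding sumset_def by auto
  hence "0\<in>B" "0 \<in> D" by auto
  thus "0 \<in> B" by simp
  have le: "x + y \<le> n" if "x \<in> B" "y \<in> D" for x y
  proof -
    have "x + y \<in> sumset B D" using that unfolding sumset_def by auto
    thus ?thesis using assms by simp
  qed
  show sub: "B \<subseteq> {0..n}" using le[OF _ \<open>0 \<in> D\<close>] by auto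
  show fin: "finite B" using sub finite_subset by blast
  have mB: "Max B \<in> B" using fin \<open>0\<in>B\<close> by (intro Max_in) auto
  show "Max B \<le> n" using sub mB by auto
  have dle: "y \<le> n - Max B" if "y \<in> D" for y using le[OF mB that] by simp
  show "sumset B {0..n - Max B} = {0..n}"
  proof
    show "sumset B {0..n - Max B} \<subseteq> {0..n}"
    proof
      fix x assume "x \<in> sumset B {0..n - Max B}"
      then obtain b d where "b \<in> B" "d \<le> n - Max B" "x = b + d" unfolding sumset_def by auto
      moreover have "b \<le> Max B" using fin \<open>b\<in>B\<close> by simp
      moreover have "Max B \<le> n" using sub mB by auto
      ultimately show "x \<in> {0..n}" by simp
    qed
  next
    show "{0..n} \<subseteq> sumset B {0..n - Max B}"
    proof
      fix x assume "x \<in> {0..n}"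
      hence "x \<in> sumset B D" using assms by simp
      then obtain b d where "b \<in> B" "d \<in> D" "x = b + d" unfolding sumset_def by auto
      thus "x \<in> sumset B {0..n - Max B}" using dle unfolding sumset_def by auto
    qed
  qed
qed

lemma SS_fin: "finite (SS n)"
proof -
  have "SS n \<subseteq> Pow {0..n}" unfolding SS_def using char(1) by blast
  thus ?thesis by (meson finite_Pow_iff finite_atLeastAtMost finite_subset)
qed

definition up1 :: "nat set \<Rightarrow> nat set" where
  "up1 B = (if B = {0} then {0} else insert (Suc (Max B)) (B - {Max B}))"
definition up2 :: "nat set \<Rightarrow> nat set" where
  "up2 B = insert (Suc (Max B)) B"

lemma cover:
  assumes "B \<in> SS n" "n \<ge> 1"
  shows "\<exists>B' \<in> SS (n-1). B = up1 B' \<or> B = up2 B'"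
proof -
  obtain D where D: "sumset B D = {0..n}" using assms unfolding SS_def by auto
  note c = char[OF D]
  define m where "m = Max B"
  show ?thesis
  proof (cases "B = {0}")
    case True
    have "sumset {0} {0..n-1} = {0..n-1}" unfolding sumset_def by auto
    hence "{0} \<in> SS (n-1)" unfolding SS_def by blast
    thus ?thesis using True unfolding up1_def by auto
  next
    case False
    then obtain x where x: "x \<in> B" "x \<noteq> 0" using c(2) by blast
    have mB: "m \<in> B" unfolding m_def using c(2,3) by (intro Max_in) auto
    have bm: "b \<le> m" if "b \<in> B" for b unfolding m_def using c(3) that by simp
    have m1: "m \<ge> 1" using bm[OF x(1)] x(2) by simp
    define B' where "B' = insert (m-1) (B - {m})"
    have finB': "finite B'" unfolding B'_def using c(3) by simp
    have bm': "b \<le> m - 1" if "b \<in> B'" for b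
      using that bm unfolding B'_def by fastforce
    have MB': "Max B' = m - 1"
      using finB' bm' unfolding B'_def by (meson Max_eqI insertI1)
    have sB: "sumset B {0..n - m} = {0..n}" using c(5) unfolding m_def by simp
    have mn: "m \<le> n" using c(4) unfolding m_def by simp
    have "sumset B' {0..n - m} = {0..n-1}"
    proof
      show "sumset B' {0..n - m} \<subseteq> {0..n-1}"
        using bm' mn m1 unfolding sumset_def by fastforce
    next
      show "{0..n-1} \<subseteq> sumset B' {0..n - m}"
      proof
        fix y assume y: "y \<in> {0..n-1}"
        hence "y \<in> sumset B {0..n - m}" using sB assms(2) by auto
        then obtain b d where bd: "b \<in> B" "d \<le> n - m" "y = b + d" unfolding sumset_def by auto
        show "y \<in> sumset B' {0..n - m}"
        proof (cases "b = m")
          case True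
          have "y = (m-1) + (d+1)" "d + 1 \<le> n - m" using bd True y m1 by auto
          moreover have "m - 1 \<in> B'" unfolding B'_def by simp
          moreover have "(m-1) + (d+1) \<in> sumset B' {0..n - m}"
            if "m - 1 \<in> B'" "d + 1 \<le> n - m" using that unfolding sumset_def by fastforce
          ultimately show ?thesis by simp
        next
          case False
          hence "b \<in> B'" using bd unfolding B'_def by simp
          thus ?thesis using bd unfolding sumset_def by auto
        qed
      qed
    qed
    hence "sumset B' {0..(n-1) - Max B'} = {0..n-1}" using MB' m1 mn
      by (metis Nat.diff_diff_eq diff_le_self le_trans)
    hence inS: "B' \<in> SS (n-1)" unfolding SS_def by blast
    show ?thesis
    proof (cases "m - 1 \<in> B")
      case True
      have "up2 B' = insert (Suc (m-1)) B'" unfolding up2_def MB' by simp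
      also have "\<dots> = B" unfolding B'_def using True mB m1 by auto
      finally have "up2 B' = B" .
      thus ?thesis using inS by metis
    next
      case False
      have "B' \<noteq> {0}"
      proof
        assume "B' = {0}"
        hence "m - 1 = 0" unfolding B'_def by auto
        thus False using False c(2) m1 by simp
      qed
      hence "up1 B' = insert (Suc (m-1)) (B' - {m-1})" unfolding up1_def MB' by simp
      also have "\<dots> = B" unfolding B'_def using False mB m1 by auto
      finally have "up1 B' = B" .
      thus ?thesis using inS by metis
    qed
  qed
qed

lemma top_in: "{0..n} \<in> SS n"
proof -
  have "sumset {0..n} {0} = {0..n}" unfolding sumset_def by auto
  thus ?thesis unfolding SS_def by blast
qed

lemma up1_top_notin:
  assumes "n \<ge> 2"
  shows "up1 {0..n-1} \<notin> SS n"
proof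
  have ne: "{0..n-1} \<noteq> {0::nat}" using assms by (metis atLeastAtMost_singleton_iff diff_is_0_eq not_numeral_le_zero Suc_1 not_less_eq_eq)
  have "Max {0..n-1} = n - 1" by (intro Max_eqI) auto
  hence U: "up1 {0..n-1} = insert n {0..n-2}" unfolding up1_def using ne assms by auto
  assume "up1 {0..n-1} \<in> SS n"
  then obtain D where D: "sumset (insert n {0..n-2}) D = {0..n}" using U unfolding SS_def by auto
  have d0: "d = 0" if "d \<in> D" for d
  proof -
    have "n + d \<in> sumset (insert n {0..n-2}) D" using that unfolding sumset_def by auto
    thus ?thesis using D by simp
  qed
  have "n - 1 \<in> sumset (insert n {0..n-2}) D" using D by simp
  then obtain b d where b: "b \<in> insert n {0..n-2}" "d \<in> D" "n - 1 = b + d" unfolding sumset_def by auto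
  hence "b = n - 1" using d0 by simp
  thus False using b(1) assms by auto
qed

lemma step:
  assumes "n \<ge> 1"
  shows "card (SS n) + (if n \<ge> 2 then 1 else 0) \<le> 2 * card (SS (n-1))"
proof (cases "n \<ge> 2")
  case True
  let ?X = "SS (n-1) - {{0..n-1}}"
  have "SS n \<subseteq> up1 ` ?X \<union> up2 ` SS (n-1)"
  proof
    fix B assume B: "B \<in> SS n"
    obtain B' where "B' \<in> SS (n-1)" "B = up1 B' \<or> B = up2 B'" using cover[OF B assms] by blast
    moreover have "B' = {0..n-1} \<longrightarrow> B \<noteq> up1 B'" using up1_top_notin[OF True] B by auto
    ultimately show "B \<in> up1 ` ?X \<union> up2 ` SS (n-1)" by auto
  qed
  hence "card (SS n) \<le> card (up1 ` ?X \<union> up2 ` SS (n-1))"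
    using SS_fin by (meson card_mono finite_Diff finite_UnI finite_imageI)
  also have "\<dots> \<le> card (up1 ` ?X) + card (up2 ` SS (n-1))" by (rule card_Un_le)
  also have "\<dots> \<le> card ?X + card (SS (n-1))" by (intro add_mono card_image_le) (use SS_fin in auto)
  also have "card ?X = card (SS (n-1)) - 1" using top_in by simp
  finally have "card (SS n) \<le> card (SS (n-1)) - 1 + card (SS (n-1))" .
  moreover have "card (SS (n-1)) > 0" using top_in SS_fin by (auto simp: card_gt_0_iff)
  ultimately show ?thesis using True by simp
next
  case False
  have "SS n \<subseteq> up1 ` SS (n-1) \<union> up2 ` SS (n-1)"
    using cover[OF _ assms] by blast
  hence "card (SS n) \<le> card (up1 ` SS (n-1) \<union> up2 ` SS (n-1))"
    using SS_fin by (meson card_mono finite_UnI finite_imageI)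
  also have "\<dots> \<le> card (up1 ` SS (n-1)) + card (up2 ` SS (n-1))" by (rule card_Un_le)
  also have "\<dots> \<le> card (SS (n-1)) + card (SS (n-1))" by (intro add_mono card_image_le) (use SS_fin in auto)
  finally show ?thesis using False by simp
qed

theorem mainTheorem7:
  fixes k :: nat
  assumes "k \<ge> 1"
  shows "2 * num_summands {0..<k} \<ge> num_summands {0..k}
         \<and> (k > 1 \<longrightarrow> 2 * num_summands {0..<k} > num_summands {0..k})"
proof -
  have e: "{0..<k} = {0..k-1}" using assms by auto
  have "card (SS k) + (if k \<ge> 2 then 1 else 0) \<le> 2 * card (SS (k-1))" by (rule step[OF assms])
  thus ?thesis unfolding e num_SS by (auto split: if_splits)
qed

end
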